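(* Let $\mathbb{H}$ be a real Hilbert space (of dimension at least $2$) and $\mathbb{Y}$ a two-dimensional smooth and strictly convex real Banach space. Let $T\in\mathbb{L}(\mathbb{H},\mathbb{Y})$ be of rank one with $\|T\|=1$. Then $M_T=\{\pm x\}$ for some $x\in S_{\mathbb{H}}$. Moreover, $T$ is an extreme contraction if and only if $(x,Tx)$ is not a CPP.
   Context: $M_T=\{x\in S_{\mathbb{H}}:\|Tx\|=\|T\|\}$. A norm one $T$ is an extreme contraction if it is an extreme point of the closed unit ball of $\mathbb{L}(\mathbb{H},\mathbb{Y})$. $B(x,r)=\{u:\|u-x\|<r\}$. $x\perp_B y$ means $\|x+\lambda y\|\ge\|x\|$ for all real $\lambda$; $x^\perp=\{y:x\perp_By\}$. For $x\in S_{\mathbb{H}}$, $y\in S_{\mathbb{Y}}$, $(x,y)$ is a CPP if there exist $r>0,\mu>0$ such that for all $z\in x^\perp\cap S_{\mathbb{H}}$, all $w\in y^\perp\cap S_{\mathbb{Y}}$ and all $a,b\in\mathbb{R}$, $ax+bz\in B(x,r)\cap S_{\mathbb{H}}$ implies $\|ay+b\mu w\|\le1$. *)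

theory Defs
  imports "HOL-Analysis.Analysis"
begin

definition bj_orth :: "'a::real_normed_vector \<Rightarrow> 'a \<Rightarrow> bool" where
  "bj_orth x y \<longleftrightarrow> (\<forall>l::real. norm (x + l *\<^sub>R y) \<ge> norm x)"

definition smooth_space :: "'a::real_normed_vector itself \<Rightarrow> bool" where
  "smooth_space _ \<longleftrightarrow>
     (\<forall>y::'a. norm y = 1 \<longrightarrow> (\<exists>!f::'a \<Rightarrow>\<^sub>L real. norm f = 1 \<and> blinfun_apply f y = 1))"

definition strictly_convex_space :: "'a::real_normed_vector itself \<Rightarrow> bool" where
  "strictly_convex_space _ \<longleftrightarrow>
     (\<forall>x y::'a. norm x = 1 \<and> norm y = 1 \<and> x \<noteq> y \<longrightarrow> norm ((1/2) *\<^sub>R (x + y)) < 1)"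

definition norm_attain :: "('a::real_normed_vector \<Rightarrow>\<^sub>L 'b::real_normed_vector) \<Rightarrow> 'a set" where
  "norm_attain T = {x. norm x = 1 \<and> norm (blinfun_apply T x) = norm T}"

definition extreme_contraction :: "('a::real_normed_vector \<Rightarrow>\<^sub>L 'b::real_normed_vector) \<Rightarrow> bool" where
  "extreme_contraction T \<longleftrightarrow> norm T = 1 \<and> T extreme_point_of (cball 0 1)"

definition CPP :: "'a::real_normed_vector \<Rightarrow> 'b::real_normed_vector \<Rightarrow> bool" where
  "CPP x y \<longleftrightarrow> norm x = 1 \<and> norm y = 1 \<and>
     (\<exists>r>0. \<exists>\<mu>>0. \<forall>z w. \<forall>a b::real.
        bj_orth x z \<and> norm z = 1 \<and> bj_orth y w \<and> norm w = 1 \<and>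
        a *\<^sub>R x + b *\<^sub>R z \<in> ball x r \<and> norm (a *\<^sub>R x + b *\<^sub>R z) = 1
        \<longrightarrow> norm (a *\<^sub>R y + (b * \<mu>) *\<^sub>R w) \<le> 1)"

end

theory Submission
  imports Defs
begin

lemma bj_orth_inner:
  fixes x z :: "'a::real_inner"
  assumes "norm x = 1" "bj_orth x z"
  shows "inner x z = 0"
proof (cases "z = 0")
  case True then show ?thesis by simp
next
  case False
  define k where "k = inner x z"
  define q where "q = inner z z"
  have q: "q > 0" using False by (simp add: q_def)
  define l where "l = - k / q"
  have "norm (x + l *\<^sub>R z) \<ge> norm x" using assms(2) by (simp add: bj_orth_def)
  hence "(norm (x + l *\<^sub>R z))^2 \<ge> 1" using assms(1) by simp
  also have "(norm (x + l *\<^sub>R z))^2 = 1 + 2 * l * k + l^2 * q"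
  proof -
    have "(norm (x + l *\<^sub>R z))^2 = inner (x + l *\<^sub>R z) (x + l *\<^sub>R z)"
      by (rule power2_norm_eq_inner)
    also have "\<dots> = inner x x + 2 * l * k + l^2 * q"
      by (simp add: inner_add_left inner_add_right k_def q_def inner_commute algebra_simps power2_eq_square)
    also have "inner x x = 1" using assms(1) by (metis norm_eq_sqrt_inner real_sqrt_eq_1_iff)
    finally show ?thesis by simp
  qed
  finally have "0 \<le> 2 * l * k + l^2 * q" by simp
  also have "2 * l * k + l^2 * q = -(k^2) / q" using q by (simp add: l_def field_simps power2_eq_square)
  finally have "0 \<le> -(k^2) / q" .
  moreover have "0 \<le> k^2 / q" using q by simp
  ultimately have "k^2 / q = 0" by linarith
  hence "k = 0" using q by simp
  thus ?thesis by (simp add: k_def)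
qed

lemma strict_conv_zero:
  fixes y v :: "'y::real_normed_vector"
  assumes strict: "strictly_convex_space TYPE('y)" and "norm y = 1"
    and "norm (y + v) \<le> 1" "norm (y - v) \<le> 1"
  shows "v = 0"
proof (rule ccontr)
  assume v: "v \<noteq> 0"
  have yeq: "y = (1/2) *\<^sub>R ((y + v) + (y - v))" by (simp add: scaleR_2 flip: scaleR_add_left)
  have "norm ((y+v)+(y-v)) \<le> norm (y+v) + norm (y-v)" by (rule norm_triangle_ineq)
  moreover have "(y+v)+(y-v) = 2 *\<^sub>R y" by (simp add: scaleR_2)
  ultimately have tri: "2 * norm y \<le> norm (y+v) + norm (y-v)" by simp
  have e1: "norm (y+v) = 1" using tri assms(2-4) by linarith
  have e2: "norm (y-v) = 1" using tri assms(2-4) by linarith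
  have ne: "y + v \<noteq> y - v"
  proof
    assume "y + v = y - v" hence "2 *\<^sub>R v = 0" by (simp add: scaleR_2 algebra_simps)
    thus False using v by simp
  qed
  have "norm ((1/2) *\<^sub>R ((y + v) + (y - v))) < 1" using strict e1 e2 ne unfolding strictly_convex_space_def
    by blast
  hence "norm y < 1" using yeq by simp
  thus False using assms by simp
qed


lemma dim2_span:
  fixes y v :: "'y::real_vector"
  assumes d: "dim (UNIV :: 'y set) = 2" and y: "y \<noteq> 0" and v: "\<forall>c. v \<noteq> c *\<^sub>R y"
  shows "\<exists>\<alpha> \<gamma>. w = \<alpha> *\<^sub>R y + \<gamma> *\<^sub>R v"
proof -
  have vy: "v \<noteq> y" using v by (metis scaleR_one)
  have sy: "v \<notin> span {y}" using v by (auto simp: span_singleton)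
  have ind: "independent {v, y}" using sy y by (simp add: independent_insert vy)
  obtain B :: "'y set" where B: "independent B" "UNIV \<subseteq> span B" "card B = 2"
    using basis_exists[of "UNIV :: 'y set"] d by metis
  have fB: "finite B" using B(3) by (metis card.infinite zero_neq_numeral)
  have "w \<in> span {v, y}"
  proof (rule ccontr)
    assume w: "w \<notin> span {v, y}"
    have wv: "w \<noteq> v" "w \<noteq> y" using w by (auto simp: span_base)
    have "independent {w, v, y}" using w ind by (simp add: independent_insert wv)
    hence "card {w, v, y} \<le> card B" using independent_span_bound[OF fB] B(2) by blast
    thus False using wv vy B(3) by simp
  qed
  then obtain k where "w - k *\<^sub>R v \<in> span {y}" by (auto simp: span_breakdown_eq)
  then obtain c where "w - k *\<^sub>R v = c *\<^sub>R y" by (auto simp: span_singleton)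
  hence "w = c *\<^sub>R y + k *\<^sub>R v" by (simp add: algebra_simps)
  thus ?thesis by blast
qed

lemma dim2_kernel:
  fixes f :: "'y::real_vector \<Rightarrow> real"
  assumes d: "dim (UNIV :: 'y set) = 2" and lf: "linear f"
  shows "\<exists>w. w \<noteq> 0 \<and> f w = 0"
proof -
  obtain B :: "'y set" where B: "independent B" "card B = 2"
    using basis_exists[of "UNIV :: 'y set"] d by metis
  then obtain e1 e2 where e: "B = {e1, e2}" "e1 \<noteq> e2" by (meson card_2_iff)
  have i: "independent {e1, e2}" using B e by simp
  have e1: "e1 \<noteq> 0" using i by (metis dependent_zero insertI1)
  have e2s: "e2 \<notin> span {e1}" using i e(2)
    by (metis independent_insert insert_commute singletonD)
  show ?thesis
  proof (cases "f e1 = 0")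
    case True then show ?thesis using e1 by blast
  next
    case False
    define w where "w = f e2 *\<^sub>R e1 - f e1 *\<^sub>R e2"
    have "f w = 0" using lf by (simp add: w_def linear_diff linear_scale)
    moreover have "w \<noteq> 0"
    proof
      assume "w = 0"
      hence "f e1 *\<^sub>R e2 = f e2 *\<^sub>R e1" by (simp add: w_def)
      hence "(1 / f e1) *\<^sub>R (f e1 *\<^sub>R e2) = (1 / f e1) *\<^sub>R (f e2 *\<^sub>R e1)" by simp
      hence "e2 = (f e2 / f e1) *\<^sub>R e1" using False by simp
      hence "e2 \<in> span {e1}" by (metis span_base span_scale singletonI)
      thus False using e2s by simp
    qed
    ultimately show ?thesis by blast
  qed
qed

lemma rank_one_decomp:
  fixes g :: "'a::real_vector \<Rightarrow> 'y::real_vector"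
  assumes "dim (range g) = 1"
  shows "\<exists>y1. y1 \<noteq> 0 \<and> (\<forall>h. \<exists>c. g h = c *\<^sub>R y1)"
proof -
  obtain B where B: "B \<subseteq> range g" "independent B" "range g \<subseteq> span B" "card B = 1"
    using basis_exists[of "range g"] assms by metis
  then obtain y1 where y1: "B = {y1}" by (meson card_1_singletonE)
  have "y1 \<noteq> 0" using B(2) y1 by simp
  moreover have "\<forall>h. \<exists>c. g h = c *\<^sub>R y1"
  proof
    fix h have "g h \<in> span {y1}" using B(3) y1 by blast
    thus "\<exists>c. g h = c *\<^sub>R y1" by (auto simp: span_singleton)
  qed
  ultimately show ?thesis by blast
qed


lemma nsq_add:
  fixes a b :: "'a::real_inner"
  shows "(norm (a + b))^2 = (norm a)^2 + 2 * inner a b + (norm b)^2"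
  by (simp add: power2_norm_eq_inner inner_add_left inner_add_right inner_commute)

lemma nsq_diff:
  fixes a b :: "'a::real_inner"
  shows "(norm (a - b))^2 = (norm a)^2 - 2 * inner a b + (norm b)^2"
  by (simp add: power2_norm_eq_inner inner_diff_left inner_diff_right inner_commute)

lemma attain_repr:
  fixes c :: "'h::{real_inner, complete_space} \<Rightarrow>\<^sub>L real"
  assumes bound: "\<And>h. \<bar>c h\<bar> \<le> norm h"
    and approx: "\<And>\<epsilon>. \<epsilon> > 0 \<Longrightarrow> \<exists>h. norm h = 1 \<and> \<bar>c h\<bar> > 1 - \<epsilon>"
  shows "\<exists>u. norm u = 1 \<and> (\<forall>h. c h = inner h u)"
proof -
  have "\<forall>n::nat. \<exists>h. norm h = 1 \<and> c h > 1 - 1 / real (Suc n)"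
  proof
    fix n :: nat
    obtain h where h: "norm h = 1" "\<bar>c h\<bar> > 1 - 1 / real (Suc n)" using approx[of "1 / real (Suc n)"] by auto
    show "\<exists>h. norm h = 1 \<and> c h > 1 - 1 / real (Suc n)"
    proof (cases "c h \<ge> 0")
      case True then show ?thesis using h by (intro exI[of _ h]) auto
    next
      case False
      have "c (-h) = - c h" by (simp add: blinfun.minus_right)
      then show ?thesis using h False by (intro exI[of _ "-h"]) auto
    qed
  qed
  then obtain hs where hs: "\<And>n. norm (hs n) = 1" "\<And>n. c (hs n) > 1 - 1 / real (Suc n)" by metis
  have key: "(norm (hs m - hs n))^2 \<le> 4 * (1 / real (Suc m) + 1 / real (Suc n))" for m n
  proof -
    define e where "e = 1 / real (Suc m) + 1 / real (Suc n)"
    have "1 / real (Suc m) \<le> 1" "1 / real (Suc n) \<le> 1" "0 \<le> 1 / real (Suc m)" "0 \<le> 1 / real (Suc n)"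
      by (simp_all only: divide_le_eq_1 of_nat_0_le_iff zero_le_divide_iff) auto
    hence e0: "0 \<le> e" "e \<le> 2" unfolding e_def by linarith+
    have "c (hs m + hs n) = c (hs m) + c (hs n)" by (simp add: blinfun.add_right)
    hence "c (hs m + hs n) > 2 - e" using hs(2)[of m] hs(2)[of n] unfolding e_def by linarith
    hence "norm (hs m + hs n) > 2 - e" using bound[of "hs m + hs n"] by linarith
    hence "(norm (hs m + hs n))^2 \<ge> (2 - e)^2" using e0 by (intro power_mono) auto
    moreover have "(norm (hs m - hs n))^2 + (norm (hs m + hs n))^2 = 4"
      using nsq_add[of "hs m" "hs n"] nsq_diff[of "hs m" "hs n"] hs(1)[of m] hs(1)[of n] by simp
    ultimately have "(norm (hs m - hs n))^2 \<le> 4 - (2 - e)^2" by linarith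
    also have "\<dots> \<le> 4 * e" using e0 by (simp add: power2_eq_square algebra_simps)
    finally show ?thesis unfolding e_def .
  qed
  have "Cauchy hs"
  proof (rule CauchyI)
    fix e :: real assume e: "e > 0"
    obtain M :: nat where M: "8 / e^2 < real M" using reals_Archimedean2 by blast
    show "\<exists>M. \<forall>m\<ge>M. \<forall>n\<ge>M. norm (hs m - hs n) < e"
    proof (intro exI allI impI)
      fix m n assume mn: "M \<le> m" "M \<le> n"
      have a: "1 / real (Suc m) \<le> 1 / real (Suc M)" "1 / real (Suc n) \<le> 1 / real (Suc M)"
        using mn by (auto simp: frac_le)
      have "8 / real (Suc M) < e^2"
      proof -
        have "8 / e^2 < real (Suc M)" using M by simp
        thus ?thesis using e by (simp add: field_simps)
      qed
      moreover have "8 / real (Suc M) = 8 * (1 / real (Suc M))" by simp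
      ultimately have "(norm (hs m - hs n))^2 < e^2" using key[of m n] a by argo
      thus "norm (hs m - hs n) < e" using e by (simp add: power_less_imp_less_base)
    qed
  qed
  then obtain u where u: "hs \<longlonglongrightarrow> u" using Cauchy_convergent_iff convergent_def by blast
  have "(\<lambda>n. norm (hs n)) \<longlonglongrightarrow> norm u" using u by (rule tendsto_norm)
  hence nu: "norm u = 1" using hs(1) LIMSEQ_unique[of "\<lambda>n. 1::real"] by (simp add: tendsto_const)
  have cl: "(\<lambda>n. c (hs n)) \<longlonglongrightarrow> c u" using u by (intro tendsto_intros)
  have l1: "(\<lambda>n. 1 - inverse (real (Suc n))) \<longlonglongrightarrow> 1"
    using tendsto_diff[OF tendsto_const LIMSEQ_inverse_real_of_nat, of 1] by simp
  have "1 \<le> c u"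
    by (rule LIMSEQ_le[OF l1 cl]) (use hs(2) in \<open>auto simp: inverse_eq_divide less_imp_le\<close>)
  hence cu: "c u = 1" using bound[of u] nu by linarith
  have "c h = inner h u" for h
  proof -
    define p where "p = h - inner h u *\<^sub>R u"
    define k where "k = c p"
    have uu: "inner u u = 1" using nu by (metis norm_eq_sqrt_inner real_sqrt_eq_1_iff)
    have pu: "inner p u = 0" by (simp add: p_def inner_diff_left uu)
    have ck: "c p = c h - inner h u" by (simp add: p_def blinfun.diff_right blinfun.scaleR_right cu)
    have "k = 0"
    proof (rule ccontr)
      assume k: "k \<noteq> 0"
      define s where "s = 1 / ((norm p)^2 + 1)"
      have s: "s > 0" unfolding s_def by (intro divide_pos_pos) (auto intro: add_nonneg_pos)
      define t where "t = k * s"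
      have "c (u + t *\<^sub>R p) = 1 + t * k" by (simp add: blinfun.add_right blinfun.scaleR_right cu k_def)
      also have "\<dots> > 0"
      proof -
        have "t * k = s * k^2" by (simp add: t_def power2_eq_square)
        moreover have "s * k^2 \<ge> 0" using s by simp
        ultimately show ?thesis by linarith
      qed
      finally have pos: "c (u + t *\<^sub>R p) > 0" .
      have "(c (u + t *\<^sub>R p))^2 \<le> (norm (u + t *\<^sub>R p))^2"
        using bound[of "u + t *\<^sub>R p"] pos by (intro power_mono) auto
      also have "(norm (u + t *\<^sub>R p))^2 = 1 + t^2 * (norm p)^2"
        using nsq_add[of u "t *\<^sub>R p"] nu pu by (simp add: inner_commute power_mult_distrib)
      finally have "(1 + t * k)^2 \<le> 1 + t^2 * (norm p)^2"
        using \<open>c (u + t *\<^sub>R p) = 1 + t * k\<close> by simp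
      hence "2 * t * k + t^2 * k^2 \<le> t^2 * (norm p)^2" by (simp add: power2_eq_square algebra_simps)
      hence "2 * s * k^2 + s^2 * k^4 \<le> s^2 * k^2 * (norm p)^2"
        by (simp add: t_def power2_eq_square power4_eq_xxxx algebra_simps)
      hence "k^2 * (s * (2 + s * k^2)) \<le> k^2 * (s * (s * (norm p)^2))"
        by (simp add: power2_eq_square power4_eq_xxxx algebra_simps)
      hence "s * (2 + s * k^2) \<le> s * (s * (norm p)^2)" using k by simp
      hence "2 + s * k^2 \<le> s * (norm p)^2" using s by simp
      moreover have "s * (norm p)^2 < 1"
      proof -
        have pp: "(norm p)^2 + 1 > 0" by (auto intro: add_nonneg_pos)
        have "s * ((norm p)^2 + 1) = 1" unfolding s_def using pp by simp
        hence "s * (norm p)^2 = 1 - s" by (simp add: algebra_simps)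
        thus ?thesis using s by linarith
      qed
      moreover have "s * k^2 \<ge> 0" using s by simp
      ultimately show False by linarith
    qed
    thus ?thesis using ck k_def by simp
  qed
  thus ?thesis using nu by blast
qed


lemma exists_orth_unit:
  fixes x :: "'h::real_inner"
  assumes dimH: "\<exists>u v::'h. norm u = 1 \<and> norm v = 1 \<and> inner u v = 0"
  shows "\<exists>z. norm z = 1 \<and> inner z x = 0"
proof -
  obtain p q :: 'h where pq: "norm p = 1" "norm q = 1" "inner p q = 0" using dimH by blast
  show ?thesis
  proof (cases "inner p x = 0")
    case True then show ?thesis using pq by blast
  next
    case False
    define a where "a = inner p x"
    define b where "b = inner q x"
    define z where "z = b *\<^sub>R p - a *\<^sub>R q"
    have pp: "inner p p = 1" "inner q q = 1" using pq by (simp_all add: power2_norm_eq_inner[symmetric])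
    have zx: "inner z x = 0" by (simp add: z_def inner_diff_left a_def b_def)
    have "inner z p = b" using pq pp by (simp add: z_def inner_diff_left inner_diff_right inner_commute)
    have "z \<noteq> 0"
    proof
      assume z0: "z = 0"
      hence "b = 0" using \<open>inner z p = b\<close> by simp
      hence "a *\<^sub>R q = 0" using z0 by (simp add: z_def)
      thus False using False a_def pq by simp
    qed
    define z0 where "z0 = (1 / norm z) *\<^sub>R z"
    have "norm z0 = 1" using \<open>z \<noteq> 0\<close> by (simp add: z0_def)
    moreover have "inner z0 x = 0" by (simp add: z0_def zx)
    ultimately show ?thesis by blast
  qed
qed

lemma exists_bj_unit:
  fixes y :: "'y::real_normed_vector"
  assumes dimY: "dim (UNIV :: 'y set) = 2" and smooth: "smooth_space TYPE('y)" and y: "norm y = 1"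
  shows "\<exists>w. norm w = 1 \<and> bj_orth y w"
proof -
  have "\<exists>!f::'y \<Rightarrow>\<^sub>L real. norm f = 1 \<and> blinfun_apply f y = 1"
    using smooth y unfolding smooth_space_def by simp
  then obtain f :: "'y \<Rightarrow>\<^sub>L real" where f: "norm f = 1" "f y = 1"
    by (meson ex1_implies_ex)
  have "linear (blinfun_apply f)" by (simp add: blinfun.bounded_linear_right bounded_linear.linear)
  then obtain w where w: "w \<noteq> 0" "f w = 0" using dim2_kernel[OF dimY] by blast
  define w0 where "w0 = (1 / norm w) *\<^sub>R w"
  have "norm w0 = 1" using w by (simp add: w0_def)
  moreover have "bj_orth y w0" unfolding bj_orth_def
  proof
    fix l :: real
    have "f (y + l *\<^sub>R w0) = 1" using f w by (simp add: w0_def blinfun.add_right blinfun.scaleR_right)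
    moreover have "\<bar>f (y + l *\<^sub>R w0)\<bar> \<le> norm (y + l *\<^sub>R w0)"
      using norm_blinfun[of f "y + l *\<^sub>R w0"] f by simp
    ultimately show "norm y \<le> norm (y + l *\<^sub>R w0)" using y by simp
  qed
  ultimately show ?thesis by blast
qed

lemma bj_coeff_zero:
  fixes y v :: "'y::real_normed_vector"
  assumes P: "\<And>a b. norm (a *\<^sub>R y + b *\<^sub>R v) \<le> sqrt (a^2 + b^2)"
    and y: "norm y = 1"
    and bj: "bj_orth y (\<alpha> *\<^sub>R y + \<gamma> *\<^sub>R v)"
  shows "\<alpha> = 0"
proof (rule ccontr)
  assume a: "\<alpha> \<noteq> 0"
  define D where "D = \<alpha>^2 + \<gamma>^2"
  have D: "D > 0" using a by (simp add: D_def add_pos_nonneg)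
  define l where "l = - \<alpha> / D"
  have "1 \<le> norm (y + l *\<^sub>R (\<alpha> *\<^sub>R y + \<gamma> *\<^sub>R v))" using bj y by (simp add: bj_orth_def)
  also have "y + l *\<^sub>R (\<alpha> *\<^sub>R y + \<gamma> *\<^sub>R v) = (1 + l * \<alpha>) *\<^sub>R y + (l * \<gamma>) *\<^sub>R v"
    by (simp add: algebra_simps)
  also have "norm \<dots> \<le> sqrt ((1 + l * \<alpha>)^2 + (l * \<gamma>)^2)" by (rule P)
  finally have "1 \<le> (1 + l * \<alpha>)^2 + (l * \<gamma>)^2" using real_sqrt_le_iff[of 1] by simp
  hence "0 \<le> 2 * l * \<alpha> + l^2 * D" by (simp add: D_def power2_eq_square algebra_simps)
  also have "2 * l * \<alpha> + l^2 * D = - (\<alpha>^2) / D" using D by (simp add: l_def field_simps power2_eq_square)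
  finally have "0 \<le> - (\<alpha>^2) / D" .
  moreover have "\<alpha>^2 / D > 0" using a D by simp
  ultimately show False by linarith
qed



lemma not_extreme_cpp:
  fixes T :: "'h::real_inner \<Rightarrow>\<^sub>L 'y::real_normed_vector"
  assumes x: "norm x = 1" and y: "norm y = 1" and Trep: "\<And>h. T h = inner h x *\<^sub>R y"
    and normT: "norm T = 1"
    and dimY: "dim (UNIV :: 'y set) = 2"
    and strict: "strictly_convex_space TYPE('y)"
    and ne: "\<not> T extreme_point_of (cball 0 1)"
  shows "CPP x y"
proof -
  have Tin: "T \<in> cball 0 1" using normT by simp
  then obtain A B where AB: "A \<in> cball 0 1" "B \<in> cball 0 1" "T \<in> open_segment A B"
    using ne unfolding extreme_point_of_def by blast
  then obtain t where t: "A \<noteq> B" "0 < t" "t < 1" "T = (1 - t) *\<^sub>R A + t *\<^sub>R B"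
    by (auto simp: in_segment)
  define d where "d = min t (1 - t)"
  have d: "d > 0" "d \<le> t" "d \<le> 1 - t" using t by (auto simp: d_def)
  define S where "S = d *\<^sub>R (B - A)"
  have S0: "S \<noteq> 0" using t d by (simp add: S_def)
  have cv: "convex (cball (0::'h \<Rightarrow>\<^sub>L 'y) 1)" by simp
  have "T + S = (1 - t - d) *\<^sub>R A + (t + d) *\<^sub>R B" using t by (simp add: S_def algebra_simps)
  also have "\<dots> \<in> cball 0 1" using d AB by (intro convexD[OF cv]) auto
  finally have nTS: "norm (T + S) \<le> 1" by simp
  have "T - S = (1 - t + d) *\<^sub>R A + (t - d) *\<^sub>R B" using t by (simp add: S_def algebra_simps)
  also have "\<dots> \<in> cball 0 1" using d AB by (intro convexD[OF cv]) auto
  finally have nTS': "norm (T - S) \<le> 1" by simp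
  have pl: "norm (T h + S h) \<le> norm h" for h
    using norm_blinfun[of "T + S" h] nTS by (simp add: plus_blinfun.rep_eq)
      (metis mult_right_mono norm_ge_zero mult_1 order_trans)
  have mi: "norm (T h - S h) \<le> norm h" for h
    using norm_blinfun[of "T - S" h] nTS' by (simp add: minus_blinfun.rep_eq)
      (metis mult_right_mono norm_ge_zero mult_1 order_trans)
  have xx: "inner x x = 1" using x by (simp add: power2_norm_eq_inner[symmetric])
  have Tx: "T x = y" using Trep xx by simp
  have Sx: "S x = 0" using strict_conv_zero[OF strict y, of "S x"] pl[of x] mi[of x] Tx x by simp
  obtain h where h: "S h \<noteq> 0" using S0 by (metis blinfun_eqI zero_blinfun.rep_eq)
  define p where "p = h - inner h x *\<^sub>R x"
  have Sp: "S p = S h" using Sx by (simp add: p_def blinfun.diff_right blinfun.scaleR_right)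
  have p0: "p \<noteq> 0" using Sp h by auto
  have px: "inner p x = 0" by (simp add: p_def inner_diff_left xx)
  define z0 where "z0 = (1 / norm p) *\<^sub>R p"
  have z0: "norm z0 = 1" "inner z0 x = 0" using p0 px by (simp_all add: z0_def)
  define v where "v = S z0"
  have v0: "v \<noteq> 0" using p0 Sp h by (simp add: v_def z0_def blinfun.scaleR_right)
  have P: "norm (a *\<^sub>R y + b *\<^sub>R v) \<le> sqrt (a^2 + b^2)" for a b
  proof -
    define hh where "hh = a *\<^sub>R x + b *\<^sub>R z0"
    have "T hh = a *\<^sub>R y" using z0 xx by (simp add: Trep hh_def inner_add_left)
    moreover have "S hh = b *\<^sub>R v" using Sx by (simp add: hh_def v_def blinfun.add_right blinfun.scaleR_right)
    moreover have "norm hh = sqrt (a^2 + b^2)"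
    proof -
      have "(norm hh)^2 = a^2 + b^2" using nsq_add[of "a *\<^sub>R x" "b *\<^sub>R z0"] x z0
        by (simp add: hh_def inner_commute power_mult_distrib)
      thus ?thesis by (metis norm_ge_zero real_sqrt_unique)
    qed
    ultimately show ?thesis using pl[of hh] by simp
  qed
  have vy: "\<forall>c. v \<noteq> c *\<^sub>R y"
  proof
    fix c show "v \<noteq> c *\<^sub>R y"
    proof
      assume vc: "v = c *\<^sub>R y"
      have e: "1 *\<^sub>R y + c *\<^sub>R v = (1 + c^2) *\<^sub>R y" by (simp add: vc algebra_simps power2_eq_square)
      have pos: "1 + c^2 \<ge> 0" by (simp add: add_nonneg_nonneg)
      have "norm (1 *\<^sub>R y + c *\<^sub>R v) = 1 + c^2" unfolding e using y pos by simp
      hence le: "1 + c^2 \<le> sqrt (1 + c^2)" using P[of 1 c] by simp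
      have "(1 + c^2)^2 \<le> (sqrt (1 + c^2))^2" using le pos by (intro power_mono) auto
      hence "(1 + c^2)^2 \<le> 1 + c^2" using pos by simp
      hence "c^2 * (1 + c^2) \<le> 0" by (simp add: power2_eq_square algebra_simps)
      moreover have "c^2 * (1 + c^2) \<ge> 0" using pos by simp
      ultimately have "c^2 * (1 + c^2) = 0" by linarith
      moreover have "1 + c^2 > 0" by (simp add: add_pos_nonneg)
      ultimately have "c = 0" by simp
      thus False using vc v0 by simp
    qed
  qed
  have y0: "y \<noteq> 0" using y by auto
  have main: "\<forall>z w. \<forall>a b::real.
        bj_orth x z \<and> norm z = 1 \<and> bj_orth y w \<and> norm w = 1 \<and>
        a *\<^sub>R x + b *\<^sub>R z \<in> ball x 1 \<and> norm (a *\<^sub>R x + b *\<^sub>R z) = 1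
        \<longrightarrow> norm (a *\<^sub>R y + (b * norm v) *\<^sub>R w) \<le> 1"
  proof (intro allI impI)
    fix z w a b
    assume H: "bj_orth x z \<and> norm z = 1 \<and> bj_orth y w \<and> norm w = 1 \<and>
        a *\<^sub>R x + b *\<^sub>R z \<in> ball x 1 \<and> norm (a *\<^sub>R x + b *\<^sub>R z) = 1"
    have xz: "inner x z = 0" using bj_orth_inner[OF x] H by blast
    have ab: "a^2 + b^2 = 1"
    proof -
      have "(norm (a *\<^sub>R x + b *\<^sub>R z))^2 = a^2 + b^2" using nsq_add[of "a *\<^sub>R x" "b *\<^sub>R z"] x H xz
        by (simp add: power_mult_distrib)
      thus ?thesis using H by simp
    qed
    obtain \<alpha> \<gamma> where w: "w = \<alpha> *\<^sub>R y + \<gamma> *\<^sub>R v" using dim2_span[OF dimY y0 vy] by blast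
    have "\<alpha> = 0" using bj_coeff_zero[OF P y] H w by blast
    hence w': "w = \<gamma> *\<^sub>R v" using w by simp
    hence g: "\<bar>\<gamma>\<bar> * norm v = 1" using H by simp
    have "norm (a *\<^sub>R y + (b * norm v) *\<^sub>R w) = norm (a *\<^sub>R y + (b * (norm v * \<gamma>)) *\<^sub>R v)"
      by (simp add: w' algebra_simps)
    also have "\<dots> \<le> sqrt (a^2 + (b * (norm v * \<gamma>))^2)" by (rule P)
    also have "(b * (norm v * \<gamma>))^2 = b^2" using g
      by (simp add: power_mult_distrib) (metis abs_mult_self_eq mult.commute power2_eq_square power_mult_distrib mult_1_right)
    finally show "norm (a *\<^sub>R y + (b * norm v) *\<^sub>R w) \<le> 1" using ab by simp
  qed
  have "norm v > 0" using v0 by simp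
  thus "CPP x y" unfolding CPP_def using x y main
    by (intro conjI exI[of _ "1::real"] exI[of _ "norm v"]) auto
qed


lemma cpp_not_extreme:
  fixes T :: "'h::real_inner \<Rightarrow>\<^sub>L 'y::real_normed_vector"
  assumes x: "norm x = 1" and y: "norm y = 1" and Trep: "\<And>h. T h = inner h x *\<^sub>R y"
    and dimH: "\<exists>u v::'h. norm u = 1 \<and> norm v = 1 \<and> inner u v = 0"
    and dimY: "dim (UNIV :: 'y set) = 2"
    and smooth: "smooth_space TYPE('y)"
    and cpp: "CPP x y"
  shows "\<not> T extreme_point_of (cball 0 1)"
proof -
  obtain r \<mu> where r: "r > 0" and mu: "\<mu> > 0" and C: "\<And>z w a b.
        bj_orth x z \<and> norm z = 1 \<and> bj_orth y w \<and> norm w = 1 \<and>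
        a *\<^sub>R x + b *\<^sub>R z \<in> ball x r \<and> norm (a *\<^sub>R x + b *\<^sub>R z) = 1
        \<Longrightarrow> norm (a *\<^sub>R y + (b * \<mu>) *\<^sub>R w) \<le> 1"
    using cpp unfolding CPP_def by blast
  obtain z0 where z0: "norm z0 = 1" "inner z0 x = 0" using exists_orth_unit[OF dimH] by blast
  obtain w0 where w0: "norm w0 = 1" "bj_orth y w0" using exists_bj_unit[OF dimY smooth y] by blast
  have xx: "inner x x = 1" using x by (simp add: power2_norm_eq_inner[symmetric])
  have zz: "inner z0 z0 = 1" using z0 by (simp add: power2_norm_eq_inner[symmetric])
  have bjz: "bj_orth x z0" unfolding bj_orth_def
  proof
    fix l :: real
    have "(norm (x + l *\<^sub>R z0))^2 = 1 + l^2" using nsq_add[of x "l *\<^sub>R z0"] x z0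
      by (simp add: inner_commute power_mult_distrib)
    hence "(norm x)^2 \<le> (norm (x + l *\<^sub>R z0))^2" using x by simp
    thus "norm x \<le> norm (x + l *\<^sub>R z0)" by (simp add: power2_le_iff_abs_le)
  qed
  define \<epsilon> where "\<epsilon> = min \<mu> (r^2 / 2)"
  have eps: "\<epsilon> > 0" "\<epsilon> \<le> \<mu>" "\<epsilon> \<le> r^2/2" using r mu by (auto simp: \<epsilon>_def)
  have nrm: "(norm (a *\<^sub>R x + b *\<^sub>R z0))^2 = a^2 + b^2" for a b
    using nsq_add[of "a *\<^sub>R x" "b *\<^sub>R z0"] x z0 by (simp add: inner_commute power_mult_distrib)
  have K2a: "norm (a *\<^sub>R y + (\<epsilon> * b) *\<^sub>R w0) \<le> 1"
    if ab: "a^2 + b^2 = 1" and near: "(a - 1)^2 + b^2 < r^2" for a b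
  proof -
    have "(norm (x - (a *\<^sub>R x + b *\<^sub>R z0)))^2 = (1 - a)^2 + b^2"
    proof -
      have eq: "x - (a *\<^sub>R x + b *\<^sub>R z0) = (1 - a) *\<^sub>R x + (- b) *\<^sub>R z0" by (simp add: algebra_simps)
      show ?thesis unfolding eq nrm by simp
    qed
    hence "(norm (x - (a *\<^sub>R x + b *\<^sub>R z0)))^2 < r^2" using near by (simp add: power2_commute)
    hence "norm (x - (a *\<^sub>R x + b *\<^sub>R z0)) < r" using r by (simp add: power_less_imp_less_base)
    hence inb: "a *\<^sub>R x + b *\<^sub>R z0 \<in> ball x r" by (simp add: dist_norm)
    have n1: "norm (a *\<^sub>R x + b *\<^sub>R z0) = 1"
      using real_sqrt_unique[of "norm (a *\<^sub>R x + b *\<^sub>R z0)" 1] nrm[of a b] ab by simp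
    have cb: "norm (a *\<^sub>R y + (b * \<mu>) *\<^sub>R w0) \<le> 1" using C[of z0 w0 a b] bjz z0 w0 inb n1 by blast
    have "a^2 \<le> 1" using ab zero_le_power2[of b] by linarith
    hence a1: "\<bar>a\<bar> \<le> 1" by (simp add: abs_square_le_1)
    define \<theta> where "\<theta> = \<epsilon> / \<mu>"
    have th: "0 \<le> \<theta>" "\<theta> \<le> 1" using eps mu by (auto simp: \<theta>_def)
    have "a *\<^sub>R y + (\<epsilon> * b) *\<^sub>R w0 = (1 - \<theta>) *\<^sub>R (a *\<^sub>R y) + \<theta> *\<^sub>R (a *\<^sub>R y + (b * \<mu>) *\<^sub>R w0)"
      using mu by (simp add: \<theta>_def algebra_simps)
    also have "norm \<dots> \<le> norm ((1 - \<theta>) *\<^sub>R (a *\<^sub>R y)) + norm (\<theta> *\<^sub>R (a *\<^sub>R y + (b * \<mu>) *\<^sub>R w0))"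
      by (rule norm_triangle_ineq)
    also have "\<dots> = (1 - \<theta>) * norm (a *\<^sub>R y) + \<theta> * norm (a *\<^sub>R y + (b * \<mu>) *\<^sub>R w0)"
      using th by (simp add: abs_mult)
    also have "\<dots> \<le> (1 - \<theta>) * 1 + \<theta> * 1"
      using th a1 y cb by (intro add_mono mult_left_mono) auto
    finally show ?thesis by simp
  qed
  have K2: "norm (a *\<^sub>R y + (\<epsilon> * b) *\<^sub>R w0) \<le> 1" if ab: "a^2 + b^2 = 1" for a b
  proof (cases "(a - 1)^2 + b^2 < r^2")
    case True then show ?thesis using K2a ab by blast
  next
    case F1: False
    show ?thesis
    proof (cases "(a + 1)^2 + b^2 < r^2")
      case True
      have "norm ((-a) *\<^sub>R y + (\<epsilon> * (-b)) *\<^sub>R w0) \<le> 1" using K2a[of "-a" "-b"] ab True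
        by (simp add: power2_commute add.commute)
      moreover have "(-a) *\<^sub>R y + (\<epsilon> * (-b)) *\<^sub>R w0 = - (a *\<^sub>R y + (\<epsilon> * b) *\<^sub>R w0)" by simp
      ultimately show ?thesis by (metis norm_minus_cancel)
    next
      case False
      have "2 - 2*a \<ge> r^2" using F1 ab by (simp add: power2_eq_square algebra_simps)
      moreover have "2 + 2*a \<ge> r^2" using False ab by (simp add: power2_eq_square algebra_simps)
      ultimately have a: "\<bar>a\<bar> \<le> 1 - r^2/2" by linarith
      have "b^2 \<le> 1" using ab zero_le_power2[of a] by linarith
      hence b1: "\<bar>b\<bar> \<le> 1" by (simp add: abs_square_le_1)
      have "norm (a *\<^sub>R y + (\<epsilon> * b) *\<^sub>R w0) \<le> norm (a *\<^sub>R y) + norm ((\<epsilon> * b) *\<^sub>R w0)"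
        by (rule norm_triangle_ineq)
      also have "\<dots> = \<bar>a\<bar> + \<epsilon> * \<bar>b\<bar>" using y w0 eps by (simp add: abs_mult)
      also have "\<epsilon> * \<bar>b\<bar> \<le> \<epsilon>" using b1 eps by (simp add: mult_le_cancel_left1)
      finally show ?thesis using a eps by linarith
    qed
  qed
  have K1: "norm (a *\<^sub>R y + (\<epsilon> * b) *\<^sub>R w0) \<le> sqrt (a^2 + b^2)" for a b
  proof (cases "a^2 + b^2 = 0")
    case True then show ?thesis by simp
  next
    case False
    define \<rho> where "\<rho> = sqrt (a^2 + b^2)"
    have "a^2 + b^2 \<ge> 0" by simp
    hence "a^2 + b^2 > 0" using False by linarith
    hence rho: "\<rho> > 0" by (simp add: \<rho>_def)
    have rr: "\<rho>^2 = a^2 + b^2" by (simp add: \<rho>_def add_nonneg_nonneg)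
    have "(a/\<rho>)^2 + (b/\<rho>)^2 = (a^2 + b^2) / \<rho>^2" by (simp add: power_divide add_divide_distrib)
    also have "\<dots> = 1" unfolding rr using False by simp
    finally have "(a/\<rho>)^2 + (b/\<rho>)^2 = 1" .
    hence "norm ((a/\<rho>) *\<^sub>R y + (\<epsilon> * (b/\<rho>)) *\<^sub>R w0) \<le> 1" by (rule K2)
    moreover have "(a/\<rho>) *\<^sub>R y + (\<epsilon> * (b/\<rho>)) *\<^sub>R w0 = (1/\<rho>) *\<^sub>R (a *\<^sub>R y + (\<epsilon> * b) *\<^sub>R w0)"
      by (simp add: algebra_simps)
    ultimately have "norm (a *\<^sub>R y + (\<epsilon> * b) *\<^sub>R w0) / \<rho> \<le> 1" using rho by simp
    thus ?thesis using rho by (simp add: \<rho>_def)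
  qed
  have bes: "sqrt ((inner h x)^2 + (inner h z0)^2) \<le> norm h" for h
  proof -
    define q where "q = inner h x *\<^sub>R x + inner h z0 *\<^sub>R z0"
    have nq: "(norm q)^2 = (inner h x)^2 + (inner h z0)^2" using nrm by (simp add: q_def)
    have "inner h q = (inner h x)^2 + (inner h z0)^2"
      by (simp add: q_def inner_add_right power2_eq_square)
    hence le: "(norm q)^2 \<le> norm h * norm q" using nq Cauchy_Schwarz_ineq2[of h q] by simp
    have "norm q \<le> norm h"
    proof (cases "norm q = 0")
      case True then show ?thesis by simp
    next
      case False
      hence "norm q > 0" by simp
      with le show ?thesis by (simp add: power2_eq_square)
    qed
    thus ?thesis using nq by (simp add: real_sqrt_unique)
  qed
  define S :: "'h \<Rightarrow>\<^sub>L 'y" where "S = Blinfun (\<lambda>h. (\<epsilon> * inner h z0) *\<^sub>R w0)"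
  have blS: "bounded_linear (\<lambda>h::'h. (\<epsilon> * inner h z0) *\<^sub>R w0)"
    by (intro bounded_linear_intros)
  have Sap: "S h = (\<epsilon> * inner h z0) *\<^sub>R w0" for h
    by (simp add: S_def bounded_linear_Blinfun_apply[OF blS])
  have nP: "norm (T + S) \<le> 1"
  proof (rule norm_blinfun_bound)
    show "(0::real) \<le> 1" by simp
    fix h
    have "norm ((T + S) h) = norm (inner h x *\<^sub>R y + (\<epsilon> * inner h z0) *\<^sub>R w0)"
      by (simp add: plus_blinfun.rep_eq Trep Sap)
    also have "\<dots> \<le> norm h" using K1 bes order_trans by blast
    finally show "norm ((T + S) h) \<le> 1 * norm h" by simp
  qed
  have nM: "norm (T - S) \<le> 1"
  proof (rule norm_blinfun_bound)
    show "(0::real) \<le> 1" by simp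
    fix h
    have "norm ((T - S) h) = norm (inner h x *\<^sub>R y + (\<epsilon> * (- inner h z0)) *\<^sub>R w0)"
      by (simp add: minus_blinfun.rep_eq Trep Sap)
    also have "\<dots> \<le> sqrt ((inner h x)^2 + (- inner h z0)^2)" by (rule K1)
    also have "\<dots> \<le> norm h" using bes by simp
    finally show "norm ((T - S) h) \<le> 1 * norm h" by simp
  qed
  have S0: "S \<noteq> 0"
  proof
    assume "S = 0"
    hence "S z0 = 0" by simp
    thus False using Sap[of z0] zz eps w0 by auto
  qed
  have neq: "T + S \<noteq> T - S"
  proof
    assume "T + S = T - S"
    hence "2 *\<^sub>R S = 0" by (simp add: scaleR_2 algebra_simps)
    thus False using S0 by simp
  qed
  have mid: "midpoint (T + S) (T - S) = T" by (simp add: midpoint_def algebra_simps flip: scaleR_add_left)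
  have "T \<in> open_segment (T + S) (T - S)" using midpoint_in_open_segment[of "T + S" "T - S"] neq mid by simp
  moreover have "T + S \<in> cball 0 1" "T - S \<in> cball 0 1" using nP nM by simp_all
  ultimately show ?thesis unfolding extreme_point_of_def by blast
qed


lemma unit_inner_pm:
  fixes h u :: "'h::real_inner"
  assumes "norm h = 1" "norm u = 1" "\<bar>inner h u\<bar> = 1"
  shows "h = u \<or> h = -u"
proof -
  define k where "k = inner h u"
  have kk: "k * k = 1" using assms(3) abs_mult_self_eq[of k] by (simp add: k_def)
  have "(norm (h - k *\<^sub>R u))^2 = 0"
    using nsq_diff[of h "k *\<^sub>R u"] assms(1,2) kk by (simp add: k_def power_mult_distrib power2_eq_square)
  hence "h = k *\<^sub>R u" by simp
  moreover have "k = 1 \<or> k = -1" using assms(3) by (auto simp: k_def abs_if split: if_splits)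
  ultimately show ?thesis by auto
qed

lemma part1:
  fixes T :: "'h::{real_inner, complete_space} \<Rightarrow>\<^sub>L 'y::real_normed_vector"
  assumes dimH: "\<exists>u v::'h. norm u = 1 \<and> norm v = 1 \<and> inner u v = 0"
    and smooth: "smooth_space TYPE('y)"
    and rank1: "dim (range (blinfun_apply T)) = 1"
    and normT: "norm T = 1"
  shows "\<exists>u y. norm u = 1 \<and> norm y = 1 \<and> (\<forall>h. T h = inner h u *\<^sub>R y)"
proof -
  obtain y1 where y1: "y1 \<noteq> 0" "\<And>h. \<exists>c. T h = c *\<^sub>R y1" using rank_one_decomp[OF rank1] by blast
  define y2 where "y2 = (1 / norm y1) *\<^sub>R y1"
  have y2: "norm y2 = 1" using y1 by (simp add: y2_def)
  have y2r: "\<exists>c. T h = c *\<^sub>R y2" for h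
  proof -
    obtain c where "T h = c *\<^sub>R y1" using y1 by blast
    hence "T h = (c * norm y1) *\<^sub>R y2" using y1 by (simp add: y2_def)
    thus ?thesis by blast
  qed
  have "\<exists>!f::'y \<Rightarrow>\<^sub>L real. norm f = 1 \<and> blinfun_apply f y2 = 1"
    using smooth y2 unfolding smooth_space_def by simp
  then obtain f :: "'y \<Rightarrow>\<^sub>L real" where f: "norm f = 1" "f y2 = 1"
    by (meson ex1_implies_ex)
  define c where "c = f o\<^sub>L T"
  have Tc: "T h = c h *\<^sub>R y2" for h
  proof -
    obtain k where k: "T h = k *\<^sub>R y2" using y2r by blast
    have "c h = k" using f by (simp add: c_def k blinfun.scaleR_right)
    thus ?thesis using k by simp
  qed
  have nTc: "norm (T h) = \<bar>c h\<bar>" for h using Tc y2 by simp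
  have bound: "\<bar>c h\<bar> \<le> norm h" for h
    using norm_blinfun[of T h] normT nTc by simp
  obtain e1 :: 'h where e1: "norm e1 = 1" using dimH by blast
  have approx: "\<exists>h. norm h = 1 \<and> \<bar>c h\<bar> > 1 - \<epsilon>" if eps: "\<epsilon> > 0" for \<epsilon>
  proof (rule ccontr)
    assume na: "\<not> ?thesis"
    hence le: "\<bar>c h\<bar> \<le> 1 - \<epsilon>" if "norm h = 1" for h using that by force
    have pos: "0 \<le> 1 - \<epsilon>" using le[OF e1] by linarith
    have "norm (T h) \<le> (1 - \<epsilon>) * norm h" for h
    proof (cases "h = 0")
      case True then show ?thesis by simp
    next
      case False
      have "\<bar>c ((1 / norm h) *\<^sub>R h)\<bar> \<le> 1 - \<epsilon>" using False by (intro le) simp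
      hence "\<bar>c h\<bar> / norm h \<le> 1 - \<epsilon>" by (simp add: blinfun.scaleR_right abs_mult)
      thus ?thesis using False nTc by (simp add: divide_le_eq mult.commute)
    qed
    hence "norm T \<le> 1 - \<epsilon>" using pos by (intro norm_blinfun_bound) auto
    thus False using normT eps by simp
  qed
  obtain u where u: "norm u = 1" "\<And>h. c h = inner h u" using attain_repr[of c, OF bound approx] by blast
  show ?thesis using u y2 Tc by (intro exI[of _ u] exI[of _ y2]) auto
qed


theorem mainTheorem9:
  fixes T :: "'h::{real_inner, complete_space} \<Rightarrow>\<^sub>L 'y::banach"
  assumes dimH: "\<exists>u v::'h. norm u = 1 \<and> norm v = 1 \<and> inner u v = 0"
    and dimY: "dim (UNIV :: 'y set) = 2"
    and smooth: "smooth_space TYPE('y)"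
    and strict: "strictly_convex_space TYPE('y)"
    and rank1: "dim (range (blinfun_apply T)) = 1"
    and normT: "norm T = 1"
  shows "(\<exists>x. norm x = 1 \<and> norm_attain T = {x, -x}) \<and>
         (\<forall>x. norm x = 1 \<and> norm_attain T = {x, -x} \<longrightarrow>
              (extreme_contraction T \<longleftrightarrow> \<not> CPP x (blinfun_apply T x)))"
proof -
  obtain u y where u: "norm u = 1" and y: "norm y = 1" and Tr: "\<And>h. T h = inner h u *\<^sub>R y"
    using part1[OF dimH smooth rank1 normT] by blast
  have uu: "inner u u = 1" using u by (simp add: power2_norm_eq_inner[symmetric])
  have NA: "norm_attain T = {u, -u}"
  proof
    show "norm_attain T \<subseteq> {u, -u}"
    proof
      fix h assume "h \<in> norm_attain T"
      hence "norm h = 1" "\<bar>inner h u\<bar> = 1" using y normT by (auto simp: norm_attain_def Tr)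
      thus "h \<in> {u, -u}" using unit_inner_pm[OF _ u] by blast
    qed
    show "{u, -u} \<subseteq> norm_attain T" using u uu y normT by (auto simp: norm_attain_def Tr)
  qed
  have P2: "extreme_contraction T \<longleftrightarrow> \<not> CPP x (blinfun_apply T x)"
    if x: "norm x = 1" and NAx: "norm_attain T = {x, -x}" for x
  proof -
    have "x \<in> norm_attain T" using NAx by simp
    hence xu: "x = u \<or> x = -u" using NA by auto
    have Tx: "\<And>h. T h = inner h x *\<^sub>R T x" using xu uu by (auto simp: Tr)
    have nTx: "norm (T x) = 1" using xu uu y by (auto simp: Tr)
    show ?thesis
    proof
      assume ec: "extreme_contraction T"
      show "\<not> CPP x (T x)"
        using cpp_not_extreme[OF x nTx Tx dimH dimY smooth] ec by (auto simp: extreme_contraction_def)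
    next
      assume nc: "\<not> CPP x (T x)"
      have "T extreme_point_of (cball 0 1)"
        using not_extreme_cpp[OF x nTx Tx normT dimY strict] nc by blast
      thus "extreme_contraction T" using normT by (simp add: extreme_contraction_def)
    qed
  qed
  show ?thesis using NA u P2 by blast
qed

end
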